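(* The zero-error capacity of a finite-state erasure channel with topological entropy $h_{ch}$ and maximal ratio $\tau$ satisfies $1-\tau-h_{ch}\le C_0\le 1-\tau$.
   Context: Logarithms are to base $q=|\mathcal{X}|\ge2$, $\mathcal{X}$ the finite input alphabet. Finite-state erasure channel: a strongly connected directed graph $\mathscr{G}=(\mathcal{S},\mathcal{E})$ with finite vertex set $\mathcal{S}$ and $\mathcal{E}\subseteq\mathcal{S}\times\mathcal{S}$, each edge labelled $\ell(e)\in\{0,1\}$, distinct edges leaving the same state having distinct labels. A noise word $v(0:n-1)$ is admissible from initial state $s_0$ if it is the label sequence of a walk of length $n$ starting at $s_0$; output $y(t)=x(t)$ if $v(t)=0$ and $y(t)=*$ (a symbol not in $\mathcal{X}$) if $v(t)=1$. The initial state is arbitrary and unknown. A zero-error code of length $n$ is a set $\mathcal{F}\subseteq\mathcal{X}^n$ such that no output word can be produced (for any initial states and admissible noise) by two distinct codewords; $C_0=\sup_n\sup_{\mathcal{F}}\log|\mathcal{F}|/n$. The adjacency matrix $\mathcal{A}$ has $\mathcal{A}_{s,s'}=1$ iff $(s,s')\in\mathcal{E}$, $\lambda$ is its Perron eigenvalue, $h_{ch}=\log\lambda$. The maximal ratio is $\tau=\max_i e_i/l_i$ over directed simple cycles ($e_i$ = number of edges labelled 1, $l_i$ = length). *)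

theory Defs
  imports "HOL-Analysis.Analysis"
begin

text \<open>Finite-state erasure channel. States: the finite type 's (vertex set = UNIV).
  Edges: E. Labels: lab e (True = label 1 = erasure, False = label 0).\<close>

definition strongly_connected :: "('s \<times> 's) set \<Rightarrow> bool" where
  "strongly_connected E \<longleftrightarrow> (\<forall>s s'. (s, s') \<in> E\<^sup>*)"

definition fsec :: "('s::finite \<times> 's) set \<Rightarrow> ('s \<times> 's \<Rightarrow> bool) \<Rightarrow> bool" where
  "fsec E lab \<longleftrightarrow> E \<noteq> {} \<and> strongly_connected E \<and>
     (\<forall>s a b. (s, a) \<in> E \<longrightarrow> (s, b) \<in> E \<longrightarrow> lab (s, a) = lab (s, b) \<longrightarrow> a = b)"

definition admissible_from ::
  "('s \<times> 's) set \<Rightarrow> ('s \<times> 's \<Rightarrow> bool) \<Rightarrow> 's \<Rightarrow> bool list \<Rightarrow> bool" where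
  "admissible_from E lab s0 vs \<longleftrightarrow>
     (\<exists>ss. length ss = Suc (length vs) \<and> ss ! 0 = s0 \<and>
        (\<forall>t < length vs. (ss ! t, ss ! Suc t) \<in> E \<and> vs ! t = lab (ss ! t, ss ! Suc t)))"

text \<open>Channel output; None plays the role of the erasure symbol *.\<close>
definition channel_out :: "'x list \<Rightarrow> bool list \<Rightarrow> 'x option list" where
  "channel_out xs vs = map2 (\<lambda>x v. if v then None else Some x) xs vs"

definition zero_error_code ::
  "('s \<times> 's) set \<Rightarrow> ('s \<times> 's \<Rightarrow> bool) \<Rightarrow> nat \<Rightarrow> 'x list set \<Rightarrow> bool" where
  "zero_error_code E lab n F \<longleftrightarrow>
     (\<forall>x \<in> F. length x = n) \<and>
     (\<forall>x1 \<in> F. \<forall>x2 \<in> F. x1 \<noteq> x2 \<longrightarrow>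
        \<not> (\<exists>s1 s2 v1 v2. length v1 = n \<and> length v2 = n \<and>
              admissible_from E lab s1 v1 \<and> admissible_from E lab s2 v2 \<and>
              channel_out x1 v1 = channel_out x2 v2))"

definition zero_error_capacity ::
  "('s \<times> 's) set \<Rightarrow> ('s \<times> 's \<Rightarrow> bool) \<Rightarrow> 'x::finite itself \<Rightarrow> real" where
  "zero_error_capacity E lab _ =
     Sup {log (real CARD('x)) (real (card F)) / real n | n (F :: 'x list set).
            n \<ge> 1 \<and> F \<noteq> {} \<and> zero_error_code E lab n F}"

definition adj_matrix :: "('s::finite \<times> 's) set \<Rightarrow> real^'s^'s" where
  "adj_matrix E = (\<chi> i j. if (i, j) \<in> E then 1 else 0)"

text \<open>Perron eigenvalue = spectral radius of the (nonnegative, irreducible) matrix.\<close>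
definition perron_eigenvalue :: "real^'n::finite^'n \<Rightarrow> real" where
  "perron_eigenvalue A =
     Max {cmod z | z. \<exists>v :: complex^'n. v \<noteq> 0 \<and>
            (\<chi> i j. complex_of_real (A $ i $ j)) *v v = z *s v}"

definition topological_entropy ::
  "('s::finite \<times> 's) set \<Rightarrow> 'x::finite itself \<Rightarrow> real" where
  "topological_entropy E _ = log (real CARD('x)) (perron_eigenvalue (adj_matrix E))"

definition simple_cycle :: "('s \<times> 's) set \<Rightarrow> 's list \<Rightarrow> bool" where
  "simple_cycle E cs \<longleftrightarrow> cs \<noteq> [] \<and> distinct cs \<and>
     (\<forall>i < length cs. (cs ! i, cs ! (Suc i mod length cs)) \<in> E)"

definition cycle_ones :: "('s \<times> 's \<Rightarrow> bool) \<Rightarrow> 's list \<Rightarrow> nat" where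
  "cycle_ones lab cs = card {i. i < length cs \<and> lab (cs ! i, cs ! (Suc i mod length cs))}"

definition max_ratio :: "('s \<times> 's) set \<Rightarrow> ('s \<times> 's \<Rightarrow> bool) \<Rightarrow> real" where
  "max_ratio E lab =
     Max {real (cycle_ones lab cs) / real (length cs) | cs. simple_cycle E cs}"

end

theory Submission
  imports Defs "Jordan_Normal_Form.Spectral_Radius"
begin


definition edges :: "'s list \<Rightarrow> ('s \<times> 's) list" where
  "edges ss = zip ss (tl ss)"

definition walk :: "('s \<times> 's) set \<Rightarrow> 's list \<Rightarrow> bool" where
  "walk E ss \<longleftrightarrow> set (edges ss) \<subseteq> E"

definition ones :: "('s \<times> 's \<Rightarrow> bool) \<Rightarrow> 's list \<Rightarrow> nat" where
  "ones lab ss = length (filter lab (edges ss))"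

lemma edges_Cons2[simp]: "edges (a # b # xs) = (a,b) # edges (b # xs)"
  unfolding edges_def by simp
lemma edges_single[simp]: "edges [a] = []" unfolding edges_def by simp
lemma edges_Nil[simp]: "edges [] = []" unfolding edges_def by simp

lemma edges_append: "edges (xs @ y # ys) = edges (xs @ [y]) @ edges (y # ys)"
proof (induction xs)
  case Nil thus ?case by simp
next
  case (Cons a xs) thus ?case by (cases xs) auto
qed

lemma ones_append: "ones lab (xs @ y # ys) = ones lab (xs @ [y]) + ones lab (y # ys)"
  unfolding ones_def by (subst edges_append) simp

lemma walk_append: "walk E (xs @ y # ys) \<longleftrightarrow> walk E (xs @ [y]) \<and> walk E (y # ys)"
  unfolding walk_def by (subst edges_append) auto

lemma length_edges[simp]: "length (edges ss) = length ss - 1"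
  unfolding edges_def by simp

lemma ones_le: "ones lab ss \<le> length ss - 1"
  unfolding ones_def using length_filter_le[of lab "edges ss"] by simp

lemma zip_snoc_eq: "length ys = length xs \<Longrightarrow> zip (xs @ [b]) ys = zip xs ys"
  by (induction xs arbitrary: ys) (auto simp: length_Suc_conv)

lemma cyc_edges: "cs \<noteq> [] \<Longrightarrow> zip cs (rotate1 cs) = edges (cs @ [hd cs])"
proof -
  assume "cs \<noteq> []"
  then obtain a l where cs: "cs = a # l" by (cases cs) auto
  have "zip ((a # l) @ [a]) (l @ [a]) = zip (a # l) (l @ [a])" by (rule zip_snoc_eq) simp
  thus ?thesis unfolding edges_def cs by simp
qed

lemma simple_cycle_iff: "simple_cycle E cs \<longleftrightarrow> cs \<noteq> [] \<and> distinct cs \<and> walk E (cs @ [hd cs])"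
proof -
  have "(\<forall>i < length cs. (cs ! i, cs ! (Suc i mod length cs)) \<in> E) \<longleftrightarrow> set (zip cs (rotate1 cs)) \<subseteq> E"
    by (auto simp: set_zip nth_rotate1)
  thus ?thesis unfolding simple_cycle_def walk_def using cyc_edges by (metis)
qed

lemma cycle_ones_eq: "cs \<noteq> [] \<Longrightarrow> cycle_ones lab cs = ones lab (cs @ [hd cs])"
proof -
  assume cs: "cs \<noteq> []"
  have "cycle_ones lab cs = length (filter lab (zip cs (rotate1 cs)))"
    unfolding cycle_ones_def length_filter_conv_card by (auto simp: nth_rotate1 intro!: arg_cong[of _ _ card])
  thus ?thesis unfolding ones_def cyc_edges[OF cs] .
qed

definition ratios :: "('s \<times> 's) set \<Rightarrow> ('s \<times> 's \<Rightarrow> bool) \<Rightarrow> real set" where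
  "ratios E lab = {real (cycle_ones lab cs) / real (length cs) | cs. simple_cycle E cs}"

lemma finite_ratios: "finite (ratios (E :: ('s::finite \<times> 's) set) lab)"
proof -
  have "{cs. simple_cycle E cs} \<subseteq> {xs. set xs \<subseteq> UNIV \<and> length xs \<le> CARD('s)}"
  proof
    fix cs assume "cs \<in> {cs. simple_cycle E cs}"
    hence "distinct cs" unfolding simple_cycle_def by simp
    hence "length cs = card (set cs)" by (simp add: distinct_card)
    also have "\<dots> \<le> CARD('s)" by (rule card_mono) auto
    finally show "cs \<in> {xs. set xs \<subseteq> UNIV \<and> length xs \<le> CARD('s)}" by simp
  qed
  hence "finite {cs. simple_cycle E cs}"
    using finite_lists_length_le[of "UNIV :: 's set" "CARD('s)"] finite_subset by auto
  hence "finite ((\<lambda>cs. real (cycle_ones lab cs) / real (length cs)) ` {cs. simple_cycle E cs})" by simp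
  moreover have "ratios E lab = (\<lambda>cs. real (cycle_ones lab cs) / real (length cs)) ` {cs. simple_cycle E cs}"
    unfolding ratios_def by auto
  ultimately show ?thesis by simp
qed

lemma closed_walk_cycle:
  "walk E (y # m @ [y]) \<Longrightarrow> \<exists>cs. simple_cycle E cs"
proof (induction "length m" arbitrary: y m rule: less_induct)
  case less
  show ?case
  proof (cases "distinct (y # m)")
    case True
    thus ?thesis using less.prems by (intro exI[of _ "y # m"]) (simp add: simple_cycle_iff)
  next
    case False
    then obtain p z u r where d: "y # m = p @ [z] @ u @ [z] @ r" using not_distinct_decomp by blast
    hence "y # m @ [y] = (p @ [z] @ u) @ z # (r @ [y])" by simp
    hence "walk E ((p @ [z] @ u) @ [z])" using less.prems walk_append by metis
    hence "walk E (p @ z # (u @ [z]))" by simp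
    hence w: "walk E (z # u @ [z])" using walk_append by metis
    have "length u < length m" using arg_cong[OF d, of length] by simp
    thus ?thesis using less.hyps w by blast
  qed
qed

lemma closed_walk_ones:
  fixes E :: "('s::finite \<times> 's) set"
  shows "walk E (y # m @ [y]) \<Longrightarrow> real (ones lab (y # m @ [y])) \<le> max_ratio E lab * real (length m + 1)"
proof (induction "length m" arbitrary: y m rule: less_induct)
  case less
  show ?case
  proof (cases "distinct (y # m)")
    case True
    hence sc: "simple_cycle E (y # m)" using less.prems by (simp add: simple_cycle_iff)
    have co: "cycle_ones lab (y # m) = ones lab (y # m @ [y])" using cycle_ones_eq[of "y # m" lab] by simp
    have "real (ones lab (y # m @ [y])) / real (length m + 1) \<in> ratios E lab"
      unfolding ratios_def using sc co by (intro CollectI exI[of _ "y # m"]) auto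
    hence "real (ones lab (y # m @ [y])) / real (length m + 1) \<le> max_ratio E lab"
      unfolding max_ratio_def using finite_ratios[of E lab] unfolding ratios_def by (intro Max_ge) auto
    thus ?thesis by (simp add: field_simps)
  next
    case False
    then obtain p z u r where d: "y # m = p @ [z] @ u @ [z] @ r" using not_distinct_decomp by blast
    have e1: "y # m @ [y] = (p @ [z] @ u) @ z # (r @ [y])" using d by simp
    have e2: "(p @ [z] @ u) @ [z] = p @ z # (u @ [z])" by simp
    have o: "ones lab (y # m @ [y]) = ones lab (p @ [z]) + ones lab (z # u @ [z]) + ones lab (z # r @ [y])"
    proof -
      have "ones lab (y # m @ [y]) = ones lab ((p @ [z] @ u) @ [z]) + ones lab (z # r @ [y])"
        unfolding e1 by (rule ones_append)
      moreover have "ones lab ((p @ [z] @ u) @ [z]) = ones lab (p @ [z]) + ones lab (z # u @ [z])"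
        unfolding e2 by (rule ones_append)
      ultimately show ?thesis by simp
    qed
    have wa: "walk E (p @ [z])" "walk E (z # u @ [z])" "walk E (z # r @ [y])"
    proof -
      have "walk E ((p @ [z] @ u) @ [z]) \<and> walk E (z # r @ [y])"
        using less.prems unfolding e1 by (rule walk_append[THEN iffD1])
      moreover have "walk E (p @ z # (u @ [z])) \<Longrightarrow> walk E (p @ [z]) \<and> walk E (z # u @ [z])"
        by (rule walk_append[THEN iffD1])
      ultimately show "walk E (p @ [z])" "walk E (z # u @ [z])" "walk E (z # r @ [y])"
        unfolding e2 by auto
    qed
    have lens: "length m + 1 = length p + length u + length r + 2" using arg_cong[OF d, of length] by simp
    have IH1: "real (ones lab (z # u @ [z])) \<le> max_ratio E lab * real (length u + 1)"
      using less.hyps[of u z] wa lens by simp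
    show ?thesis
    proof (cases p)
      case Nil
      hence "z = y" using d by simp
      hence IH2: "real (ones lab (y # r @ [y])) \<le> max_ratio E lab * real (length r + 1)"
        using less.hyps[of r y] wa lens Nil by simp
      have l: "real (length m + 1) = real (length u + 1) + real (length r + 1)" using lens Nil by simp
      have "ones lab (y # m @ [y]) = ones lab (z # u @ [z]) + ones lab (y # r @ [y])"
        using o Nil \<open>z = y\<close> by (simp add: ones_def)
      hence "real (ones lab (y # m @ [y])) = real (ones lab (z # u @ [z])) + real (ones lab (y # r @ [y]))"
        by simp
      also have "\<dots> \<le> max_ratio E lab * real (length u + 1) + max_ratio E lab * real (length r + 1)"
        using IH1 IH2 by linarith
      also have "\<dots> = max_ratio E lab * real (length m + 1)" unfolding l by (simp add: distrib_left)
      finally show ?thesis .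
    next
      case (Cons a p')
      hence a: "a = y" using d by simp
      have o2: "ones lab (y # (p' @ z # r) @ [y]) = ones lab (p @ [z]) + ones lab (z # r @ [y])"
        using ones_append[of lab p z "r @ [y]"] Cons a by simp
      have w2: "walk E (y # (p' @ z # r) @ [y])"
        using walk_append[of E p z "r @ [y]"] wa Cons a by simp
      have IH2: "real (ones lab (y # (p' @ z # r) @ [y])) \<le> max_ratio E lab * real (length (p' @ z # r) + 1)"
        using less.hyps[of "p' @ z # r" y] w2 lens Cons by simp
      have l: "real (length m + 1) = real (length u + 1) + real (length (p' @ z # r) + 1)"
        using lens Cons by simp
      have "real (ones lab (y # m @ [y])) = real (ones lab (z # u @ [z])) + real (ones lab (y # (p' @ z # r) @ [y]))"
        using o o2 by simp
      also have "\<dots> \<le> max_ratio E lab * real (length u + 1) + max_ratio E lab * real (length (p' @ z # r) + 1)"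
        using IH1 IH2 by linarith
      also have "\<dots> = max_ratio E lab * real (length m + 1)" unfolding l by (simp add: distrib_left)
      finally show ?thesis .
    qed
  qed
qed

lemma open_walk_ones:
  fixes E :: "('s::finite \<times> 's) set"
  assumes tau0: "0 \<le> max_ratio E lab"
  shows "walk E ss \<Longrightarrow> ss \<noteq> [] \<Longrightarrow> real (ones lab ss) \<le> max_ratio E lab * real (length ss - 1) + real CARD('s)"
proof (induction "length ss" arbitrary: ss rule: less_induct)
  case less
  show ?case
  proof (cases "distinct ss")
    case True
    hence "length ss = card (set ss)" by (simp add: distinct_card)
    also have "\<dots> \<le> CARD('s)" by (rule card_mono) auto
    finally have "real (ones lab ss) \<le> real CARD('s)" using ones_le[of lab ss] by linarith
    moreover have "0 \<le> max_ratio E lab * real (length ss - 1)" using tau0 by simp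
    ultimately show ?thesis by linarith
  next
    case False
    then obtain p z u r where d: "ss = p @ [z] @ u @ [z] @ r" using not_distinct_decomp by blast
    have e1: "ss = (p @ [z] @ u) @ z # r" using d by simp
    have e2: "(p @ [z] @ u) @ [z] = p @ z # (u @ [z])" by simp
    have o: "ones lab ss = ones lab (p @ [z]) + ones lab (z # u @ [z]) + ones lab (z # r)"
    proof -
      have "ones lab ss = ones lab ((p @ [z] @ u) @ [z]) + ones lab (z # r)"
        unfolding e1 by (rule ones_append)
      moreover have "ones lab ((p @ [z] @ u) @ [z]) = ones lab (p @ [z]) + ones lab (z # u @ [z])"
        unfolding e2 by (rule ones_append)
      ultimately show ?thesis by simp
    qed
    have wa: "walk E (p @ [z])" "walk E (z # u @ [z])" "walk E (z # r)"
    proof -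
      have "walk E ((p @ [z] @ u) @ [z]) \<and> walk E (z # r)"
        using less.prems(1) unfolding e1 by (rule walk_append[THEN iffD1])
      moreover have "walk E (p @ z # (u @ [z])) \<Longrightarrow> walk E (p @ [z]) \<and> walk E (z # u @ [z])"
        by (rule walk_append[THEN iffD1])
      ultimately show "walk E (p @ [z])" "walk E (z # u @ [z])" "walk E (z # r)"
        unfolding e2 by auto
    qed
    have w2: "walk E (p @ z # r)" using wa walk_append by metis
    have o2: "ones lab (p @ z # r) = ones lab (p @ [z]) + ones lab (z # r)" by (rule ones_append)
    have lens: "length ss = length p + length u + length r + 2" using d by simp
    have IH: "real (ones lab (p @ z # r)) \<le> max_ratio E lab * real (length (p @ z # r) - 1) + real CARD('s)"
      using less.hyps[of "p @ z # r"] w2 lens by simp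
    have C: "real (ones lab (z # u @ [z])) \<le> max_ratio E lab * real (length u + 1)"
      using closed_walk_ones[OF wa(2)] .
    have l: "real (length ss - 1) = real (length (p @ z # r) - 1) + real (length u + 1)" using lens by simp
    have "real (ones lab ss) = real (ones lab (p @ z # r)) + real (ones lab (z # u @ [z]))" using o o2 by simp
    also have "\<dots> \<le> max_ratio E lab * real (length (p @ z # r) - 1) + real CARD('s) + max_ratio E lab * real (length u + 1)"
      using IH C by linarith
    also have "\<dots> = max_ratio E lab * real (length ss - 1) + real CARD('s)" unfolding l by (simp add: distrib_left)
    finally show ?thesis .
  qed
qed

lemma rtrancl_walk: "(x, y) \<in> E\<^sup>* \<Longrightarrow> \<exists>ss. ss \<noteq> [] \<and> hd ss = x \<and> last ss = y \<and> walk E ss"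
proof (induction rule: rtrancl_induct)
  case base thus ?case by (intro exI[of _ "[x]"]) (simp add: walk_def)
next
  case (step y z)
  then obtain ss where ss: "ss \<noteq> []" "hd ss = x" "last ss = y" "walk E ss" by blast
  have "ss = butlast ss @ [y]" using ss append_butlast_last_id[of ss] by simp
  hence "walk E (butlast ss @ y # [z])" using walk_append[of E "butlast ss" y "[z]"] ss step(2)
    by (simp add: walk_def)
  moreover have "hd (butlast ss @ [y, z]) = x" using ss \<open>ss = butlast ss @ [y]\<close> by (cases "butlast ss") auto
  ultimately show ?case by (intro exI[of _ "butlast ss @ [y, z]"]) auto
qed

lemma exists_cycle:
  fixes E :: "('s::finite \<times> 's) set"
  assumes "fsec E lab" shows "\<exists>cs. simple_cycle E cs"
proof -
  obtain a b where ab: "(a,b) \<in> E" using assms unfolding fsec_def by auto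
  have "(b, a) \<in> E\<^sup>*" using assms unfolding fsec_def strongly_connected_def by auto
  then obtain ss where ss: "ss \<noteq> []" "hd ss = b" "last ss = a" "walk E ss" using rtrancl_walk by metis
  have e: "a # ss = a # butlast ss @ [a]" using ss append_butlast_last_id[of ss] by simp
  have "walk E (a # ss)" using ss ab by (cases ss) (auto simp: walk_def)
  hence "walk E (a # butlast ss @ [a])" using e by simp
  thus ?thesis by (rule closed_walk_cycle)
qed

lemma tau_facts:
  fixes E :: "('s::finite \<times> 's) set"
  assumes "fsec E lab"
  shows "max_ratio E lab \<in> ratios E lab" "0 \<le> max_ratio E lab"
proof -
  have ne: "ratios E lab \<noteq> {}" using exists_cycle[OF assms] unfolding ratios_def by auto
  show m: "max_ratio E lab \<in> ratios E lab"
    unfolding max_ratio_def using Max_in[OF finite_ratios ne] unfolding ratios_def .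
  thus "0 \<le> max_ratio E lab" unfolding ratios_def by auto
qed

lemma adm_walk:
  assumes "admissible_from E lab s v"
  shows "\<exists>ss. length ss = Suc (length v) \<and> walk E ss \<and> v = map lab (edges ss) \<and> hd ss = s"
proof -
  obtain ss where ss: "length ss = Suc (length v)" "ss ! 0 = s"
        "\<forall>t < length v. (ss ! t, ss ! Suc t) \<in> E \<and> v ! t = lab (ss ! t, ss ! Suc t)"
    using assms unfolding admissible_from_def by blast
  have en: "edges ss ! t = (ss ! t, ss ! Suc t)" if "t < length v" for t
    using that ss(1) unfolding edges_def by (simp add: nth_tl)
  have "walk E ss" unfolding walk_def
  proof
    fix e assume "e \<in> set (edges ss)"
    then obtain t where "t < length (edges ss)" "e = edges ss ! t" by (metis in_set_conv_nth)
    thus "e \<in> E" using en ss by auto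
  qed
  moreover have "v = map lab (edges ss)" using en ss by (intro nth_equalityI) auto
  moreover have "hd ss = s" using ss by (cases ss) auto
  ultimately show ?thesis using ss by blast
qed

lemma adm_count:
  fixes E :: "('s::finite \<times> 's) set"
  assumes "fsec E lab" "admissible_from E lab s v"
  shows "real (length (filter id v)) \<le> max_ratio E lab * real (length v) + real CARD('s)"
proof -
  obtain ss where ss: "length ss = Suc (length v)" "walk E ss" "v = map lab (edges ss)"
    using adm_walk[OF assms(2)] by blast
  have "length (filter id v) = ones lab ss" unfolding ss(3) ones_def by (simp add: filter_map comp_def length_map)
  moreover have "ss \<noteq> []" using ss by auto
  ultimately show ?thesis using open_walk_ones[OF tau_facts(2)[OF assms(1)] ss(2)] ss(1) by simp
qed



lemma channel_out_Cons[simp]: "channel_out (x # xs) (v # vs) = (if v then None else Some x) # channel_out xs vs"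
  unfolding channel_out_def by simp
lemma channel_out_Nil[simp]: "channel_out [] vs = []" "channel_out xs [] = []"
  unfolding channel_out_def by auto

lemma channel_out_same_noise:
  assumes "length x1 = length v1" "length x2 = length v2" "channel_out x1 v1 = channel_out x2 v2"
  shows "v1 = v2"
  using assms
proof (induction v1 arbitrary: x1 x2 v2)
  case Nil thus ?case by (cases x2; cases v2) auto
next
  case (Cons a v1)
  then obtain y1 ys1 where x1: "x1 = y1 # ys1" by (cases x1) auto
  from Cons obtain y2 ys2 b v2' where x2: "x2 = y2 # ys2" "v2 = b # v2'"
    by (cases x2; cases v2) (auto simp: channel_out_def)
  show ?case using Cons.prems Cons.IH[of ys1 ys2 v2'] x1 x2 by (auto split: if_splits)
qed

definition keep :: "bool list \<Rightarrow> 'x list \<Rightarrow> 'x list" where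
  "keep v x = map snd (filter (Not \<circ> fst) (zip v x))"
definition era :: "bool list \<Rightarrow> 'x list \<Rightarrow> 'x list" where
  "era v x = map snd (filter fst (zip v x))"

lemma keep_Cons[simp]: "keep (b # v) (y # x) = (if b then keep v x else y # keep v x)"
  unfolding keep_def by simp
lemma era_Cons[simp]: "era (b # v) (y # x) = (if b then y # era v x else era v x)"
  unfolding era_def by simp
lemma keep_Nil[simp]: "keep [] x = []" unfolding keep_def by simp
lemma era_Nil[simp]: "era [] x = []" unfolding era_def by simp

lemma channel_keep:
  "length x1 = length v \<Longrightarrow> length x2 = length v \<Longrightarrow>
   channel_out x1 v = channel_out x2 v \<longleftrightarrow> keep v x1 = keep v x2"
proof (induction v arbitrary: x1 x2)
  case Nil thus ?case by simp
next
  case (Cons b v)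
  then obtain y1 ys1 y2 ys2 where x: "x1 = y1 # ys1" "x2 = y2 # ys2"
    by (cases x1; cases x2) auto
  show ?case using Cons x by auto
qed

lemma channel_era_inj:
  "length x1 = length v \<Longrightarrow> length x2 = length v \<Longrightarrow>
   channel_out x1 v = channel_out x2 v \<Longrightarrow> era v x1 = era v x2 \<Longrightarrow> x1 = x2"
proof (induction v arbitrary: x1 x2)
  case Nil thus ?case by simp
next
  case (Cons b v)
  then obtain y1 ys1 y2 ys2 where x: "x1 = y1 # ys1" "x2 = y2 # ys2"
    by (cases x1; cases x2) auto
  show ?case using Cons x by (auto split: if_splits)
qed

lemma length_keep: "length x = length v \<Longrightarrow> length (keep v x) = length (filter Not v)"
  by (induction v arbitrary: x) (auto simp: length_Suc_conv)
lemma length_era: "length x = length v \<Longrightarrow> length (era v x) = length (filter id v)"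
  by (induction v arbitrary: x) (auto simp: length_Suc_conv)

lemma card_lists: "card {xs :: 'x::finite list. length xs = k} = CARD('x) ^ k"
  using card_lists_length_eq[of "UNIV :: 'x set" k] by simp

lemma finite_lists: "finite {xs :: 'x::finite list. length xs = k}"
  using finite_lists_length_eq[of "UNIV :: 'x set" k] by simp

lemma greedy:
  assumes "finite U" "\<And>x y. R x y \<Longrightarrow> R y x" "\<And>x. x \<in> U \<Longrightarrow> R x x"
    "\<And>x. x \<in> U \<Longrightarrow> card {y \<in> U. R x y} \<le> D"
  shows "\<exists>F \<subseteq> U. (\<forall>x\<in>F. \<forall>y\<in>F. x \<noteq> y \<longrightarrow> \<not> R x y) \<and> card U \<le> D * card F"
  using assms(1,3,4)
proof (induction "card U" arbitrary: U rule: less_induct)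
  case less
  show ?case
  proof (cases "U = {}")
    case True thus ?thesis by (intro exI[of _ "{}"]) auto
  next
    case False
    then obtain x where x: "x \<in> U" by auto
    define U' where "U' = U - {y \<in> U. R x y}"
    have xn: "x \<notin> U'" using less.prems(2)[OF x] unfolding U'_def by auto
    have sub: "U' \<subseteq> U" unfolding U'_def by auto
    have "U' \<subset> U" using xn x sub by auto
    hence lt: "card U' < card U" by (rule psubset_card_mono[OF less.prems(1)])
    have fU': "finite U'" by (rule finite_subset[OF sub less.prems(1)])
    have p2: "R y y" if "y \<in> U'" for y using that sub less.prems(2) by auto
    have p3: "card {z \<in> U'. R y z} \<le> D" if "y \<in> U'" for y
    proof -
      have "card {z \<in> U'. R y z} \<le> card {z \<in> U. R y z}"
        using sub less.prems(1) by (intro card_mono) auto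
      thus ?thesis using less.prems(3)[of y] that sub by force
    qed
    obtain F' where F': "F' \<subseteq> U'" "\<forall>x\<in>F'. \<forall>y\<in>F'. x \<noteq> y \<longrightarrow> \<not> R x y" "card U' \<le> D * card F'"
      using less.hyps[OF lt fU' p2 p3] by blast
    have fF': "finite F'" by (rule finite_subset[OF F'(1) fU'])
    have "card U = card U' + card {y \<in> U. R x y}"
    proof -
      have "card U' = card U - card {y \<in> U. R x y}"
        unfolding U'_def using less.prems(1) by (intro card_Diff_subset) auto
      moreover have "card {y \<in> U. R x y} \<le> card U" using less.prems(1) by (intro card_mono) auto
      ultimately show ?thesis by simp
    qed
    hence cU: "card U \<le> D * card F' + D" using F'(3) less.prems(3)[OF x] by linarith
    have xF: "x \<notin> F'" using xn F'(1) by auto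
    have "\<forall>a\<in>insert x F'. \<forall>b\<in>insert x F'. a \<noteq> b \<longrightarrow> \<not> R a b"
    proof (intro ballI impI)
      fix a b assume a: "a \<in> insert x F'" and b: "b \<in> insert x F'" and ab: "a \<noteq> b"
      have nx: "\<not> R x c" if "c \<in> F'" for c using that F'(1) unfolding U'_def by auto
      show "\<not> R a b"
      proof (cases "a = x")
        case True thus ?thesis using b ab nx by auto
      next
        case False
        hence aF: "a \<in> F'" using a by auto
        show ?thesis
        proof (cases "b = x")
          case True thus ?thesis using nx[OF aF] assms(2)[of a b] by auto
        next
          case False thus ?thesis using aF b ab F'(2) by auto
        qed
      qed
    qed
    moreover have "card U \<le> D * card (insert x F')" using cU xF fF' by simp
    moreover have "insert x F' \<subseteq> U" using x F'(1) sub by auto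
    ultimately show ?thesis by blast
  qed
qed

lemma adm_Nil[simp]: "admissible_from E lab s []"
  unfolding admissible_from_def by (intro exI[of _ "[s]"]) auto

lemma adm_Cons: "admissible_from E lab s (b # v) \<longleftrightarrow>
   (\<exists>s'. (s,s') \<in> E \<and> b = lab (s,s') \<and> admissible_from E lab s' v)"
proof
  assume "admissible_from E lab s (b # v)"
  then obtain ss where ss: "length ss = Suc (length (b#v))" "ss ! 0 = s"
    "\<forall>t < length (b#v). (ss ! t, ss ! Suc t) \<in> E \<and> (b#v) ! t = lab (ss ! t, ss ! Suc t)"
    unfolding admissible_from_def by blast
  have "\<forall>t<length v. (tl ss ! t, tl ss ! Suc t) \<in> E \<and> v ! t = lab (tl ss ! t, tl ss ! Suc t)"
  proof (intro allI impI)
    fix t assume "t < length v"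
    thus "(tl ss ! t, tl ss ! Suc t) \<in> E \<and> v ! t = lab (tl ss ! t, tl ss ! Suc t)"
      using ss(3)[rule_format, of "Suc t"] ss(1) by (simp add: nth_tl)
  qed
  hence "admissible_from E lab (ss ! 1) v" unfolding admissible_from_def
    using ss(1) by (intro exI[of _ "tl ss"]) (auto simp: nth_tl)
  thus "\<exists>s'. (s,s') \<in> E \<and> b = lab (s,s') \<and> admissible_from E lab s' v"
    using ss(3)[rule_format, of 0] ss(2) by auto
next
  assume "\<exists>s'. (s,s') \<in> E \<and> b = lab (s,s') \<and> admissible_from E lab s' v"
  then obtain s' ss where h: "(s,s') \<in> E" "b = lab (s,s')" "length ss = Suc (length v)" "ss ! 0 = s'"
    "\<forall>t < length v. (ss ! t, ss ! Suc t) \<in> E \<and> v ! t = lab (ss ! t, ss ! Suc t)"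
    unfolding admissible_from_def by blast
  have "\<forall>t<length (b # v). ((s # ss) ! t, (s # ss) ! Suc t) \<in> E \<and> (b # v) ! t = lab ((s # ss) ! t, (s # ss) ! Suc t)"
  proof (intro allI impI)
    fix t assume "t < length (b # v)"
    thus "((s # ss) ! t, (s # ss) ! Suc t) \<in> E \<and> (b # v) ! t = lab ((s # ss) ! t, (s # ss) ! Suc t)"
      using h by (cases t) auto
  qed
  thus "admissible_from E lab s (b # v)" unfolding admissible_from_def
    using h by (intro exI[of _ "s # ss"]) auto
qed

definition adm :: "('s \<times> 's) set \<Rightarrow> ('s \<times> 's \<Rightarrow> bool) \<Rightarrow> nat \<Rightarrow> 's \<Rightarrow> bool list set" where
  "adm E lab n s = {v. length v = n \<and> admissible_from E lab s v}"

lemma finite_adm: "finite (adm E lab n s)"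
proof -
  have "adm E lab n s \<subseteq> {v. set v \<subseteq> UNIV \<and> length v = n}" unfolding adm_def by auto
  thus ?thesis using finite_lists_length_eq[of "UNIV :: bool set" n] finite_subset by auto
qed

lemma adm_0: "adm E lab 0 s = {[]}" unfolding adm_def by auto

lemma card_adm_Suc:
  fixes E :: "('s::finite \<times> 's) set"
  shows "card (adm E lab (Suc n) s) \<le> (\<Sum>s'\<in>{s'. (s,s') \<in> E}. card (adm E lab n s'))"
proof -
  have "adm E lab (Suc n) s \<subseteq> (\<Union>s'\<in>{s'. (s,s') \<in> E}. Cons (lab (s,s')) ` adm E lab n s')"
  proof
    fix v assume "v \<in> adm E lab (Suc n) s"
    then obtain b v' where v: "v = b # v'" "length v' = n" "admissible_from E lab s (b # v')"
      unfolding adm_def by (cases v) auto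
    then obtain s' where "(s,s') \<in> E" "b = lab (s,s')" "admissible_from E lab s' v'"
      using adm_Cons by metis
    thus "v \<in> (\<Union>s'\<in>{s'. (s,s') \<in> E}. Cons (lab (s,s')) ` adm E lab n s')"
      using v unfolding adm_def by auto
  qed
  hence "card (adm E lab (Suc n) s) \<le> card (\<Union>s'\<in>{s'. (s,s') \<in> E}. Cons (lab (s,s')) ` adm E lab n s')"
    by (intro card_mono) (auto intro: finite_adm)
  also have "\<dots> \<le> (\<Sum>s'\<in>{s'. (s,s') \<in> E}. card (Cons (lab (s,s')) ` adm E lab n s'))"
    by (rule card_UN_le) simp
  also have "\<dots> \<le> (\<Sum>s'\<in>{s'. (s,s') \<in> E}. card (adm E lab n s'))"
    by (intro sum_mono card_image_le finite_adm)
  finally show ?thesis .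
qed



lemma sum_shift1: "(\<Sum>j<Suc k. g (Suc j mod Suc k)) = (\<Sum>j<Suc k. (g j :: nat))"
proof -
  have "(\<Sum>j<Suc k. g (Suc j mod Suc k)) = (\<Sum>j<k. g (Suc j mod Suc k)) + g 0"
    by (simp add: sum.lessThan_Suc)
  also have "(\<Sum>j<k. g (Suc j mod Suc k)) = (\<Sum>j<k. g (Suc j))" by (intro sum.cong) auto
  also have "\<dots> + g 0 = (\<Sum>j<Suc k. g j)" using sum.lessThan_Suc_shift[of g k] by simp
  finally show ?thesis .
qed

lemma periodic_sum: assumes "0 < (l::nat)" shows "(\<Sum>j<l. h ((j + t) mod l)) = (\<Sum>j<l. (h j :: nat))"
proof (induction t)
  case 0 show ?case by (intro sum.cong) auto
next
  case (Suc t)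
  obtain k where l: "l = Suc k" using assms by (cases l) auto
  define g where "g j = h ((j + t) mod l)" for j
  have "(\<Sum>j<l. h ((j + Suc t) mod l)) = (\<Sum>j<l. g (Suc j mod l))"
    unfolding g_def by (intro sum.cong) (auto simp: mod_add_left_eq)
  also have "\<dots> = (\<Sum>j<l. g j)" unfolding l by (rule sum_shift1)
  finally show ?case using Suc unfolding g_def by simp
qed

lemma count_map_upt: "length (filter id (map g [0..<n])) = (\<Sum>t<n. if g t then 1 else 0)"
  by (induction n) auto

lemma card_count: "card {i. i < (l::nat) \<and> P i} = (\<Sum>i<l. if P i then 1 else 0)"
proof -
  have "(\<Sum>i<l. if P i then 1 else 0) = (\<Sum>i\<in>{i\<in>{..<l}. P i}. (1::nat))"
    by (rule sum.inter_filter[symmetric]) simp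
  also have "\<dots> = card {i. i < l \<and> P i}" by simp
  finally show ?thesis by simp
qed

lemma upper_code:
  fixes E :: "('s::finite \<times> 's) set" and F :: "'x::finite list set"
  assumes fs: "fsec E lab" and q: "CARD('x) \<ge> 2" and z: "zero_error_code E lab n F"
    and n: "n \<ge> 1" and Fne: "F \<noteq> {}"
  shows "log (real CARD('x)) (real (card F)) / real n \<le> 1 - max_ratio E lab"
proof -
  obtain cs where sc: "simple_cycle E cs"
    and tau: "max_ratio E lab = real (cycle_ones lab cs) / real (length cs)"
    using tau_facts(1)[OF fs] unfolding ratios_def by auto
  define l where "l = length cs"
  have l0: "0 < l" using sc unfolding simple_cycle_def l_def by simp
  define W where "W i = lab (cs ! i, cs ! (Suc i mod l))" for i
  define e where "e = cycle_ones lab cs"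
  have e: "e = (\<Sum>i<l. if W i then 1 else 0)"
    unfolding e_def cycle_ones_def W_def l_def by (rule card_count)
  define vj where "vj j = map (\<lambda>t. W ((j + t) mod l)) [0..<n]" for j
  have adm: "admissible_from E lab (cs ! j) (vj j)" if j: "j < l" for j
  proof -
    define ss where "ss = map (\<lambda>t. cs ! ((j + t) mod l)) [0..<Suc n]"
    have len: "length ss = Suc (length (vj j))" unfolding vj_def ss_def by simp
    have h0: "ss ! 0 = cs ! j" using j unfolding ss_def by (simp del: upt_Suc)
    have st: "\<forall>t < length (vj j). (ss ! t, ss ! Suc t) \<in> E \<and> vj j ! t = lab (ss ! t, ss ! Suc t)"
    proof (intro allI impI)
      fix t assume t: "t < length (vj j)"
      hence tn: "t < n" unfolding vj_def by simp
      define i where "i = (j + t) mod l"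
      have il: "i < l" unfolding i_def using l0 by simp
      have suc: "(j + Suc t) mod l = Suc i mod l" unfolding i_def by (simp add: mod_Suc_eq)
      have n1: "ss ! t = cs ! i"
        using tn unfolding i_def ss_def by (simp del: upt_Suc add: nth_map_upt)
      have n2: "ss ! Suc t = cs ! (Suc i mod l)"
        using tn suc unfolding ss_def by (simp del: upt_Suc add: nth_map_upt)
      have "(cs ! i, cs ! (Suc i mod l)) \<in> E" using sc il unfolding simple_cycle_def l_def by blast
      moreover have "vj j ! t = lab (cs ! i, cs ! (Suc i mod l))"
        using tn unfolding vj_def W_def i_def by simp
      ultimately show "(ss ! t, ss ! Suc t) \<in> E \<and> vj j ! t = lab (ss ! t, ss ! Suc t)"
        unfolding n1 n2 by simp
    qed
    show ?thesis unfolding admissible_from_def using len h0 st by blast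
  qed
  define cnt where "cnt j = length (filter id (vj j))" for j
  have cnt: "cnt j = (\<Sum>t<n. if W ((j + t) mod l) then 1 else 0)" for j
    unfolding cnt_def vj_def by (rule count_map_upt)
  have "(\<Sum>j<l. cnt j) = (\<Sum>t<n. \<Sum>j<l. if W ((j + t) mod l) then 1 else 0)"
    unfolding cnt by (rule sum.swap)
  also have "\<dots> = (\<Sum>t<n. e)" unfolding e
    by (intro sum.cong refl periodic_sum[OF l0])
  finally have sumcnt: "(\<Sum>j<l. cnt j) = n * e" by simp
  obtain j where j: "j < l" "n * e \<le> cnt j * l"
  proof (rule ccontr)
    assume "\<not> thesis"
    hence "\<forall>j<l. cnt j * l < n * e" using that by (meson not_le)
    hence "(\<Sum>j<l. cnt j * l) < (\<Sum>j<l. n * e)" using l0 by (intro sum_strict_mono) auto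
    hence "(\<Sum>j<l. cnt j) * l < l * (n * e)" by (simp add: sum_distrib_right)
    thus False unfolding sumcnt by simp
  qed
  define k where "k = cnt j"
  have lenv: "length (vj j) = n" unfolding vj_def by simp
  have Flen: "\<forall>x\<in>F. length x = n" using z unfolding zero_error_code_def by blast
  have kn: "k \<le> n" unfolding k_def cnt_def using length_filter_le[of id "vj j"] lenv by simp
  have lk: "length (filter Not (vj j)) = n - k"
    using sum_length_filter_compl[of id "vj j"] lenv unfolding k_def cnt_def by (simp add: comp_def)
  have inj: "inj_on (keep (vj j)) F"
  proof
    fix x1 x2 assume x: "x1 \<in> F" "x2 \<in> F" "keep (vj j) x1 = keep (vj j) x2"
    hence co: "channel_out x1 (vj j) = channel_out x2 (vj j)"
      using channel_keep[of x1 "vj j" x2] Flen lenv by simp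
    show "x1 = x2"
    proof (rule ccontr)
      assume "x1 \<noteq> x2"
      hence "\<not> (\<exists>s1 s2 v1 v2. length v1 = n \<and> length v2 = n \<and>
              admissible_from E lab s1 v1 \<and> admissible_from E lab s2 v2 \<and>
              channel_out x1 v1 = channel_out x2 v2)"
        using z x unfolding zero_error_code_def by blast
      thus False using co adm[OF j(1)] lenv by blast
    qed
  qed
  have "keep (vj j) ` F \<subseteq> {xs. length xs = n - k}"
  proof
    fix y assume "y \<in> keep (vj j) ` F"
    then obtain x where x: "x \<in> F" "y = keep (vj j) x" by auto
    have "length x = length (vj j)" using Flen x lenv by simp
    thus "y \<in> {xs. length xs = n - k}" using length_keep[of x "vj j"] lk x by simp
  qed
  hence "card F \<le> card {xs :: 'x list. length xs = n - k}"
    by (rule card_inj_on_le[OF inj _ finite_lists])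
  hence cF: "card F \<le> CARD('x) ^ (n - k)" by (simp add: card_lists)
  have "F \<subseteq> {xs. length xs = n}" using Flen by auto
  hence Ffin: "finite F" by (rule finite_subset[OF _ finite_lists])
  have cF0: "0 < card F" using Fne Ffin by (simp add: card_gt_0_iff)
  have q1: "1 < real CARD('x)" using q by simp
  have "log (real CARD('x)) (real (card F)) \<le> log (real CARD('x)) (real (CARD('x) ^ (n - k)))"
    using cF cF0 by (subst log_le_cancel_iff[OF q1]) auto
  also have "\<dots> = real (n - k)" using q1 by (simp add: log_nat_power)
  also have "\<dots> = real n - real k" using kn by simp
  finally have lg: "log (real CARD('x)) (real (card F)) \<le> real n - real k" .
  have "real n * real e \<le> real k * real l" using j(2) unfolding k_def by (simp only: of_nat_mult[symmetric] of_nat_le_iff)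
  hence "real n * (real e / real l) \<le> real k" using l0 by (simp add: field_simps)
  hence "real n * max_ratio E lab \<le> real k" unfolding tau e_def l_def .
  hence "log (real CARD('x)) (real (card F)) \<le> real n * (1 - max_ratio E lab)"
    using lg by (simp add: algebra_simps)
  thus ?thesis using n by (simp add: field_simps)
qed


lemma out_edge:
  fixes E :: "('s::finite \<times> 's) set"
  assumes "fsec E lab" shows "\<exists>s'. (s, s') \<in> E"
proof -
  obtain a b where ab: "(a,b) \<in> E" using assms unfolding fsec_def by auto
  have "(s, a) \<in> E\<^sup>*" using assms unfolding fsec_def strongly_connected_def by auto
  thus ?thesis
  proof (cases rule: converse_rtranclE)
    case base thus ?thesis using ab by auto
  next
    case (step c) thus ?thesis by auto
  qed
qed

lemma exists_adm:
  fixes E :: "('s::finite \<times> 's) set"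
  assumes "fsec E lab" shows "\<exists>v. length v = n \<and> admissible_from E lab s v"
proof (induction n arbitrary: s)
  case 0 show ?case by (intro exI[of _ "[]"]) simp
next
  case (Suc n)
  obtain s' where s': "(s, s') \<in> E" using out_edge[OF assms] by blast
  obtain v where "length v = n" "admissible_from E lab s' v" using Suc by blast
  thus ?case using s' by (intro exI[of _ "lab (s,s') # v"]) (auto simp: adm_Cons)
qed

definition Vset :: "('s \<times> 's) set \<Rightarrow> ('s \<times> 's \<Rightarrow> bool) \<Rightarrow> nat \<Rightarrow> bool list set" where
  "Vset E lab n = {v. length v = n \<and> (\<exists>s. admissible_from E lab s v)}"

lemma finite_Vset: "finite (Vset E lab n)"
proof -
  have "Vset E lab n \<subseteq> {xs :: bool list. length xs = n}" unfolding Vset_def by auto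
  thus ?thesis by (rule finite_subset[OF _ finite_lists])
qed

lemma lower_code:
  fixes E :: "('s::finite \<times> 's) set" and lab :: "'s \<times> 's \<Rightarrow> bool" and n :: nat
  assumes fs: "fsec E lab"
  defines "m \<equiv> nat \<lfloor>max_ratio E lab * real n\<rfloor> + CARD('s)"
  shows "\<exists>F :: 'x::finite list set. F \<noteq> {} \<and> zero_error_code E lab n F \<and>
     CARD('x) ^ n \<le> card F * (card (Vset E lab n) * CARD('x) ^ m)"
proof -
  define U where "U = {xs :: 'x list. length xs = n}"
  define R where "R x1 x2 \<longleftrightarrow> (\<exists>s1 s2 v1 v2. length v1 = n \<and> length v2 = n \<and>
              admissible_from E lab s1 v1 \<and> admissible_from E lab s2 v2 \<and>
              channel_out x1 v1 = channel_out x2 (v2 :: bool list))" for x1 x2 :: "'x list"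
  define D where "D = card (Vset E lab n) * CARD('x) ^ m"
  have sym: "R x y \<Longrightarrow> R y x" for x y unfolding R_def by metis
  obtain s0 v0 where v0: "length v0 = n" "admissible_from E lab s0 v0" using exists_adm[OF fs] by blast
  have refl: "R x x" for x unfolding R_def using v0 by blast
  have cnt: "length (filter id v) \<le> m" if vV: "v \<in> Vset E lab n" for v
  proof -
    obtain s where v: "length v = n" "admissible_from E lab s v" using vV unfolding Vset_def by blast
    have "real (length (filter id v)) \<le> max_ratio E lab * real n + real CARD('s)"
      using adm_count[OF fs v(2)] v(1) by simp
    hence "of_int (int (length (filter id v)) - int CARD('s)) \<le> max_ratio E lab * real n" by simp
    hence "int (length (filter id v)) - int CARD('s) \<le> \<lfloor>max_ratio E lab * real n\<rfloor>"
      by (simp only: le_floor_iff)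
    thus ?thesis unfolding m_def by linarith
  qed
  have deg: "card {y \<in> U. R x y} \<le> D" if x: "x \<in> U" for x
  proof -
    have "{y \<in> U. R x y} \<subseteq> (\<Union>v\<in>Vset E lab n. {y \<in> U. channel_out y v = channel_out x v})"
    proof
      fix y assume y: "y \<in> {y \<in> U. R x y}"
      then obtain s1 s2 v1 v2 where h: "length v1 = n" "length v2 = n"
        "admissible_from E lab s1 v1" "admissible_from E lab s2 v2" "channel_out x v1 = channel_out y v2"
        unfolding R_def by blast
      have "v1 = v2" using channel_out_same_noise[OF _ _ h(5)] h x y unfolding U_def by simp
      thus "y \<in> (\<Union>v\<in>Vset E lab n. {y \<in> U. channel_out y v = channel_out x v})"
        using h y unfolding Vset_def by auto
    qed
    hence "card {y \<in> U. R x y} \<le> card (\<Union>v\<in>Vset E lab n. {y \<in> U. channel_out y v = channel_out x v})"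
      by (intro card_mono) (auto intro!: finite_Vset simp: U_def finite_lists)
    also have "\<dots> \<le> (\<Sum>v\<in>Vset E lab n. card {y \<in> U. channel_out y v = channel_out x v})"
      by (rule card_UN_le[OF finite_Vset])
    also have "\<dots> \<le> (\<Sum>v\<in>Vset E lab n. CARD('x) ^ m)"
    proof (rule sum_mono)
      fix v assume v: "v \<in> Vset E lab n"
      have lv: "length v = n" using v unfolding Vset_def by simp
      have inj: "inj_on (era v) {y \<in> U. channel_out y v = channel_out x v}"
      proof
        fix y1 y2 assume y: "y1 \<in> {y \<in> U. channel_out y v = channel_out x v}"
          "y2 \<in> {y \<in> U. channel_out y v = channel_out x v}" "era v y1 = era v y2"
        thus "y1 = y2" using channel_era_inj[of y1 v y2] lv unfolding U_def by auto
      qed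
      have "era v ` {y \<in> U. channel_out y v = channel_out x v} \<subseteq> {xs. length xs = length (filter id v)}"
        using length_era lv unfolding U_def by auto
      hence "card {y \<in> U. channel_out y v = channel_out x v} \<le> card {xs :: 'x list. length xs = length (filter id v)}"
        by (rule card_inj_on_le[OF inj _ finite_lists])
      also have "\<dots> = CARD('x) ^ length (filter id v)" by (rule card_lists)
      also have "\<dots> \<le> CARD('x) ^ m" using cnt[OF v] by (intro power_increasing) auto
      finally show "card {y \<in> U. channel_out y v = channel_out x v} \<le> CARD('x) ^ m" .
    qed
    also have "\<dots> = D" unfolding D_def by simp
    finally show ?thesis .
  qed
  obtain F where F: "F \<subseteq> U" "\<forall>x\<in>F. \<forall>y\<in>F. x \<noteq> y \<longrightarrow> \<not> R x y" "card U \<le> D * card F"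
    using greedy[of U R D] sym refl deg by (auto simp: U_def finite_lists)
  have cU: "card U = CARD('x) ^ n" unfolding U_def by (rule card_lists)
  have "F \<noteq> {}"
  proof
    assume "F = {}"
    hence "card U = 0" using F(3) by simp
    thus False using cU by simp
  qed
  moreover have "zero_error_code E lab n F"
    unfolding zero_error_code_def using F(1,2) unfolding U_def R_def by blast
  moreover have "CARD('x) ^ n \<le> card F * D" using F(3) cU by (simp add: mult.commute)
  ultimately show ?thesis unfolding D_def by blast
qed



lemma pow_mat_Suc_left: assumes "(A :: 'a::semiring_1 mat) \<in> carrier_mat n n"
  shows "A ^\<^sub>m Suc k = A * A ^\<^sub>m k"
proof (induction k)
  case 0 thus ?case using assms by simp
next
  case (Suc k)
  have "A ^\<^sub>m Suc (Suc k) = A ^\<^sub>m Suc k * A" by simp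
  also have "\<dots> = (A * A ^\<^sub>m k) * A" using Suc by simp
  also have "\<dots> = A * (A ^\<^sub>m k * A)" using assms
    by (intro assoc_mult_mat[of _ n n _ n]) auto
  finally show ?case by simp
qed

lemma smult_pow_mat: assumes "(A :: 'a::comm_ring_1 mat) \<in> carrier_mat n n"
  shows "(c \<cdot>\<^sub>m A) ^\<^sub>m k = c^k \<cdot>\<^sub>m (A ^\<^sub>m k)"
proof (induction k)
  case 0 thus ?case using assms by (auto intro!: eq_matI)
next
  case (Suc k)
  have "(c \<cdot>\<^sub>m A) ^\<^sub>m Suc k = (c^k \<cdot>\<^sub>m (A ^\<^sub>m k)) * (c \<cdot>\<^sub>m A)" using Suc by simp
  also have "\<dots> = c^k \<cdot>\<^sub>m (A ^\<^sub>m k * (c \<cdot>\<^sub>m A))" using assms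
    by (intro mult_smult_assoc_mat[of _ n n _ n]) auto
  also have "\<dots> = c^k \<cdot>\<^sub>m (c \<cdot>\<^sub>m (A ^\<^sub>m k * A))" using assms
    by (subst mult_smult_distrib[of _ n n _ n]) auto
  also have "\<dots> = c^Suc k \<cdot>\<^sub>m (A ^\<^sub>m Suc k)" by (auto intro!: eq_matI)
  finally show ?case .
qed

lemma smult_mat_vec: assumes "(A :: 'a::comm_ring_1 mat) \<in> carrier_mat n n" "v \<in> carrier_vec n"
  shows "(c \<cdot>\<^sub>m A) *\<^sub>v v = c \<cdot>\<^sub>v (A *\<^sub>v v)"
  using assms by (auto intro!: eq_vecI simp: scalar_prod_def sum_distrib_left mult.assoc)

lemma spectral_facts:
  fixes E :: "('s::finite \<times> 's) set"
  defines "lam \<equiv> perron_eigenvalue (adj_matrix E)"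
  assumes f: "bij_betw f {..<N} (UNIV :: 's set)"
  defines "Mr \<equiv> mat N N (\<lambda>(i,j). if (f i, f j) \<in> E then 1 else 0 :: real)"
  shows "0 \<le> lam" "\<And>z. eigenvalue (map_mat complex_of_real Mr) z \<Longrightarrow> cmod z \<le> lam"
proof -
  define Mc where "Mc = map_mat complex_of_real Mr"
  have Mc: "Mc \<in> carrier_mat N N" unfolding Mc_def Mr_def by simp
  define g where "g = inv_into {..<N} f"
  have g1: "g s < N" "f (g s) = s" for s
    using f unfolding g_def bij_betw_def
    by (auto intro: inv_into_into[of s f "{..<N}", simplified] f_inv_into_f)
  have g2: "i < N \<Longrightarrow> g (f i) = i" for i
    using f unfolding g_def bij_betw_def by (auto intro: inv_into_f_f)
  have Npos: "N > 0" using g1(1) by (metis gr_zeroI not_less0)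
  define P where "P = {cmod z |z. \<exists>v :: complex^'s. v \<noteq> 0 \<and>
            (\<chi> i j. complex_of_real (adj_matrix E $ i $ j)) *v v = z *s v}"
  have lam_def': "lam = Max P" unfolding lam_def P_def perron_eigenvalue_def ..
  have sumre: "(\<Sum>s'\<in>UNIV. h s') = (\<Sum>j<N. h (f j))" for h :: "'s \<Rightarrow> complex"
    using sum.reindex_bij_betw[OF f, of h] by simp
  have MC: "Mc $$ (i,j) = (if (f i, f j) \<in> E then 1 else 0)" if "i < N" "j < N" for i j
    using that unfolding Mc_def Mr_def by simp
  have A2J: "eigenvalue Mc z" if "v \<noteq> 0" and eq: "(\<chi> i j. complex_of_real (adj_matrix E $ i $ j)) *v v = z *s v"
    for z and v :: "complex^'s"
  proof -
    define w where "w = Matrix.vec N (\<lambda>i. v $ f i)"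
    obtain s where s: "v $ s \<noteq> 0" using \<open>v \<noteq> 0\<close> by (auto simp: Finite_Cartesian_Product.vec_eq_iff)
    have "w $ g s \<noteq> 0" unfolding w_def using g1 s by simp
    hence wne: "w \<noteq> 0\<^sub>v N" using g1 by auto
    have "Mc *\<^sub>v w = z \<cdot>\<^sub>v w"
    proof (rule eq_vecI)
      fix i assume i: "i < dim_vec (z \<cdot>\<^sub>v w)"
      hence i: "i < N" unfolding w_def by simp
      have "(\<Sum>s'\<in>UNIV. complex_of_real (adj_matrix E $ f i $ s') * v $ s') = z * v $ f i"
        using arg_cong[OF eq, of "\<lambda>x. x $ f i"] unfolding matrix_vector_mult_def vector_scalar_mult_def
        by simp
      moreover have "(\<Sum>s'\<in>UNIV. complex_of_real (adj_matrix E $ f i $ s') * v $ s')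
          = (\<Sum>j<N. Mc $$ (i,j) * w $ j)"
        unfolding sumre using i MC unfolding w_def adj_matrix_def by (intro sum.cong) auto
      ultimately show "(Mc *\<^sub>v w) $ i = (z \<cdot>\<^sub>v w) $ i"
        using i Mc unfolding w_def by (simp add: scalar_prod_def lessThan_atLeast0)
    qed (use Mc w_def in simp)
    thus ?thesis unfolding eigenvalue_def eigenvector_def using wne Mc w_def
      by (intro exI[of _ w]) auto
  qed
  have J2A: "cmod z \<in> P" if "eigenvalue Mc z" for z
  proof -
    from that obtain w where w: "w \<in> carrier_vec N" "w \<noteq> 0\<^sub>v N" "Mc *\<^sub>v w = z \<cdot>\<^sub>v w"
      unfolding eigenvalue_def eigenvector_def using Mc by auto
    define v :: "complex^'s" where "v = (\<chi> s. w $ g s)"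
    obtain i where i: "i < N" "w $ i \<noteq> 0" using w by (metis carrier_vecD eq_vecI index_zero_vec)
    have "v $ f i \<noteq> 0" unfolding v_def using g2 i by simp
    hence vne: "v \<noteq> 0" by auto
    have "(\<chi> i j. complex_of_real (adj_matrix E $ i $ j)) *v v = z *s v"
    proof (rule Finite_Cartesian_Product.vec_eq_iff[THEN iffD2], rule allI)
      fix s
      have "(Mc *\<^sub>v w) $ g s = z * w $ g s" using w g1 by simp
      moreover have "(Mc *\<^sub>v w) $ g s = (\<Sum>j<N. Mc $$ (g s,j) * w $ j)"
        using Mc w(1) g1 by (simp add: scalar_prod_def lessThan_atLeast0)
      moreover have "(\<Sum>s'\<in>UNIV. complex_of_real (adj_matrix E $ s $ s') * v $ s')
          = (\<Sum>j<N. Mc $$ (g s,j) * w $ j)"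
        unfolding sumre using g1 g2 MC unfolding v_def adj_matrix_def by (intro sum.cong) auto
      ultimately show "((\<chi> i j. complex_of_real (adj_matrix E $ i $ j)) *v v) $ s = (z *s v) $ s"
        unfolding matrix_vector_mult_def vector_scalar_mult_def v_def by simp
    qed
    thus ?thesis unfolding P_def using vne by blast
  qed
  have "P \<subseteq> cmod ` spectrum Mc"
  proof
    fix x assume "x \<in> P"
    then obtain z v where "x = cmod z" "v \<noteq> 0"
      "(\<chi> i j. complex_of_real (adj_matrix E $ i $ j)) *v v = z *s v" unfolding P_def by blast
    thus "x \<in> cmod ` spectrum Mc" using A2J unfolding spectrum_def by auto
  qed
  hence finP: "finite P" using card_finite_spectrum(1)[OF Mc] finite_surj by blast
  show lamb: "\<And>z. eigenvalue (map_mat complex_of_real Mr) z \<Longrightarrow> cmod z \<le> lam"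
    unfolding lam_def' using J2A finP Mc_def by (intro Max_ge) auto
  from spectrum_non_empty[OF Mc Npos] obtain z where "z \<in> spectrum Mc" by auto
  hence "cmod z \<le> lam" using lamb unfolding spectrum_def Mc_def by auto
  thus "0 \<le> lam" by (meson norm_ge_zero order_trans)
qed

lemma walk_growth:
  fixes E :: "('s::finite \<times> 's) set" and lab :: "'s \<times> 's \<Rightarrow> bool"
  assumes mu: "perron_eigenvalue (adj_matrix E) < \<mu>"
  shows "\<exists>K. \<forall>n s. real (card (adm E lab n s)) \<le> K * \<mu> ^ n"
proof -
  define N where "N = CARD('s)"
  obtain f where f0: "bij_betw f {0..<N} (UNIV :: 's set)"
    using ex_bij_betw_nat_finite[of "UNIV :: 's set"] unfolding N_def by auto
  have f: "bij_betw f {..<N} (UNIV :: 's set)" using f0 by (simp add: lessThan_atLeast0)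
  define Mr where "Mr = mat N N (\<lambda>(i,j). if (f i, f j) \<in> E then 1 else 0 :: real)"
  define Mc where "Mc = map_mat complex_of_real Mr"
  note sf = spectral_facts[OF f, of E, folded Mr_def Mc_def]
  have Mr: "Mr \<in> carrier_mat N N" unfolding Mr_def by simp
  have Mc: "Mc \<in> carrier_mat N N" unfolding Mc_def Mr_def by simp
  have Npos: "N > 0" unfolding N_def by simp
  have mupos: "\<mu> > 0" using sf(1) mu by linarith
  define B where "B = complex_of_real (1/\<mu>) \<cdot>\<^sub>m Mc"
  have B: "B \<in> carrier_mat N N" unfolding B_def using Mc by simp
  have evB: "cmod z < 1" if "eigenvalue B z" for z
  proof -
    from that obtain v where v: "v \<in> carrier_vec N" "v \<noteq> 0\<^sub>v N" "B *\<^sub>v v = z \<cdot>\<^sub>v v"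
      unfolding eigenvalue_def eigenvector_def using B by auto
    have "B *\<^sub>v v = complex_of_real (1/\<mu>) \<cdot>\<^sub>v (Mc *\<^sub>v v)"
      unfolding B_def by (rule smult_mat_vec[OF Mc v(1)])
    hence "Mc *\<^sub>v v = (complex_of_real \<mu> * z) \<cdot>\<^sub>v v"
    proof -
      assume h: "B *\<^sub>v v = complex_of_real (1/\<mu>) \<cdot>\<^sub>v (Mc *\<^sub>v v)"
      show ?thesis
      proof (rule eq_vecI)
        fix i assume "i < dim_vec ((complex_of_real \<mu> * z) \<cdot>\<^sub>v v)"
        hence i: "i < N" using v by simp
        have "(B *\<^sub>v v) $ i = z * v $ i" using v(3) i v(1) by simp
        moreover have "(B *\<^sub>v v) $ i = complex_of_real (1/\<mu>) * (Mc *\<^sub>v v) $ i"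
          using h i Mc by simp
        ultimately have "(Mc *\<^sub>v v) $ i = complex_of_real \<mu> * (z * v $ i)"
          using mupos by (simp add: field_simps)
        thus "(Mc *\<^sub>v v) $ i = ((complex_of_real \<mu> * z) \<cdot>\<^sub>v v) $ i" using i v(1) by simp
      qed (use Mc v in simp)
    qed
    hence "eigenvalue Mc (complex_of_real \<mu> * z)"
      unfolding eigenvalue_def eigenvector_def using v Mc by (intro exI[of _ v]) auto
    hence "cmod (complex_of_real \<mu> * z) \<le> perron_eigenvalue (adj_matrix E)"
      using sf(2) unfolding Mc_def by blast
    hence "\<mu> * cmod z \<le> perron_eigenvalue (adj_matrix E)" using mupos by (simp add: norm_mult)
    hence "\<mu> * cmod z < \<mu> * 1" using mu by linarith
    thus ?thesis using mupos mult_less_cancel_left_pos by blast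
  qed
  have "spectral_radius B < 1"
    using spectral_radius_mem_max(1)[OF B Npos] evB unfolding spectrum_def by auto
  then obtain c where c: "\<And>k. norm_bound (B ^\<^sub>m k) c"
    using spectral_radius_jnf_norm_bound_less_1_upper_triangular[OF B] by auto
  have Bk: "B ^\<^sub>m k = complex_of_real (1/\<mu>)^k \<cdot>\<^sub>m map_mat complex_of_real (Mr ^\<^sub>m k)" for k
  proof -
    have "B ^\<^sub>m k = complex_of_real (1/\<mu>)^k \<cdot>\<^sub>m (Mc ^\<^sub>m k)"
      unfolding B_def by (rule smult_pow_mat[OF Mc])
    moreover have "Mc ^\<^sub>m k = map_mat complex_of_real (Mr ^\<^sub>m k)"
      unfolding Mc_def by (rule of_real_hom.mat_hom_pow[OF Mr, symmetric])
    ultimately show ?thesis by simp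
  qed
  have ent: "(Mr ^\<^sub>m k) $$ (i,j) \<le> c * \<mu> ^ k" if "i < N" "j < N" for i j k
  proof -
    have n1: "norm ((B ^\<^sub>m k) $$ (i,j)) \<le> c" using c[of k] that B unfolding norm_bound_def by simp
    have eq: "(B ^\<^sub>m k) $$ (i,j) = complex_of_real ((1/\<mu>)^k * ((Mr ^\<^sub>m k) $$ (i,j)))"
      unfolding Bk using that Mr by simp
    have "norm (complex_of_real ((1/\<mu>)^k * ((Mr ^\<^sub>m k) $$ (i,j)))) \<le> c" using n1 unfolding eq .
    hence "\<bar>(1/\<mu>)^k * ((Mr ^\<^sub>m k) $$ (i,j))\<bar> \<le> c" by (simp only: norm_of_real)
    hence "(1/\<mu>)^k * \<bar>(Mr ^\<^sub>m k) $$ (i,j)\<bar> \<le> c" using mupos by (simp add: abs_mult)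
    hence "\<bar>(Mr ^\<^sub>m k) $$ (i,j)\<bar> \<le> c * \<mu> ^ k" using mupos by (simp add: field_simps)
    thus ?thesis by simp
  qed
  have nonneg: "0 \<le> (Mr ^\<^sub>m k) $$ (i,j)" if "i < N" "j < N" for i j k
    using that
  proof (induction k arbitrary: j)
    case 0 thus ?case using Mr by simp
  next
    case (Suc k)
    have "(Mr ^\<^sub>m Suc k) $$ (i,j) = (\<Sum>l = 0..<N. (Mr ^\<^sub>m k) $$ (i,l) * Mr $$ (l,j))"
      using Suc.prems Mr by (simp add: scalar_prod_def)
    also have "\<dots> \<ge> 0" using Suc Mr_def by (intro sum_nonneg mult_nonneg_nonneg) auto
    finally show ?case .
  qed
  have claim: "real (card (adm E lab n (f i))) \<le> (\<Sum>k<N. (Mr ^\<^sub>m n) $$ (i,k))" if "i < N" for n i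
    using that
  proof (induction n arbitrary: i)
    case 0
    have "(\<Sum>k<N. (Mr ^\<^sub>m 0) $$ (i,k)) = (\<Sum>k<N. if i = k then 1 else 0)"
      using 0 Mr by (intro sum.cong) auto
    also have "\<dots> = 1" using 0 by simp
    finally show ?case by (simp add: adm_0)
  next
    case (Suc n)
    have "real (card (adm E lab (Suc n) (f i))) \<le> (\<Sum>s'\<in>{s'. (f i,s') \<in> E}. real (card (adm E lab n s')))"
      using card_adm_Suc[of E lab n "f i"] by (simp flip: of_nat_sum)
    also have "\<dots> = (\<Sum>s'\<in>UNIV. (if (f i, s') \<in> E then 1 else 0) * real (card (adm E lab n s')))"
    proof -
      have "(\<Sum>s'\<in>UNIV. (if (f i, s') \<in> E then 1 else 0) * real (card (adm E lab n s')))
          = (\<Sum>s'\<in>UNIV. if (f i, s') \<in> E then real (card (adm E lab n s')) else 0)"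
        by (intro sum.cong) auto
      also have "\<dots> = (\<Sum>s'\<in>{x\<in>UNIV. (f i, x) \<in> E}. real (card (adm E lab n s')))"
        by (rule sum.inter_filter[symmetric]) simp
      finally show ?thesis by simp
    qed
    also have "\<dots> = (\<Sum>j<N. Mr $$ (i,j) * real (card (adm E lab n (f j))))"
    proof -
      have "(\<Sum>s'\<in>UNIV. (if (f i, s') \<in> E then 1 else 0) * real (card (adm E lab n s')))
         = (\<Sum>j\<in>{..<N}. (if (f i, f j) \<in> E then 1 else 0) * real (card (adm E lab n (f j))))"
        using sum.reindex_bij_betw[OF f, of "\<lambda>s'. (if (f i, s') \<in> E then 1 else 0) * real (card (adm E lab n s'))"]
        by simp
      also have "\<dots> = (\<Sum>j<N. Mr $$ (i,j) * real (card (adm E lab n (f j))))"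
        using Suc.prems unfolding Mr_def by (intro sum.cong) auto
      finally show ?thesis .
    qed
    also have "\<dots> \<le> (\<Sum>j<N. Mr $$ (i,j) * (\<Sum>k<N. (Mr ^\<^sub>m n) $$ (j,k)))"
      using Suc Mr_def by (intro sum_mono mult_left_mono) auto
    also have "\<dots> = (\<Sum>k<N. \<Sum>j<N. Mr $$ (i,j) * (Mr ^\<^sub>m n) $$ (j,k))"
      unfolding sum_distrib_left by (rule sum.swap)
    also have "\<dots> = (\<Sum>k<N. (Mr ^\<^sub>m Suc n) $$ (i,k))"
      unfolding pow_mat_Suc_left[OF Mr] using Suc.prems Mr
      by (intro sum.cong) (auto simp: scalar_prod_def lessThan_atLeast0)
    finally show ?case .
  qed
  have "real (card (adm E lab n s)) \<le> (N * c) * \<mu> ^ n" for n s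
  proof -
    obtain i where i: "i < N" "s = f i" using f unfolding bij_betw_def by auto
    have "real (card (adm E lab n s)) \<le> (\<Sum>k<N. (Mr ^\<^sub>m n) $$ (i,k))" using claim i by simp
    also have "\<dots> \<le> (\<Sum>k<N. c * \<mu> ^ n)" using ent i by (intro sum_mono) auto
    finally show ?thesis by simp
  qed
  thus ?thesis by blast
qed



lemma card_Vset_bound:
  fixes E :: "('s::finite \<times> 's) set"
  assumes "\<forall>n s. real (card (adm E lab n s)) \<le> K * \<mu> ^ n"
  shows "real (card (Vset E lab n)) \<le> real CARD('s) * K * \<mu> ^ n"
proof -
  have "Vset E lab n = (\<Union>s. adm E lab n s)" unfolding Vset_def adm_def by auto
  hence "card (Vset E lab n) \<le> (\<Sum>s\<in>UNIV. card (adm E lab n s))"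
    using card_UN_le[of "UNIV :: 's set" "\<lambda>s. adm E lab n s"] by simp
  hence "real (card (Vset E lab n)) \<le> (\<Sum>s\<in>UNIV. real (card (adm E lab n s)))"
    by (simp flip: of_nat_sum)
  also have "\<dots> \<le> (\<Sum>s\<in>(UNIV::'s set). K * \<mu> ^ n)" using assms by (intro sum_mono) auto
  finally show ?thesis by simp
qed

lemma lam_ge1:
  fixes E :: "('s::finite \<times> 's) set"
  assumes fs: "fsec E lab"
  shows "1 \<le> perron_eigenvalue (adj_matrix E)"
proof (rule ccontr)
  let ?l = "perron_eigenvalue (adj_matrix E)"
  assume "\<not> 1 \<le> ?l"
  define \<mu> where "\<mu> = (max ?l 0 + 1) / 2"
  have mu: "?l < \<mu>" "0 < \<mu>" "\<mu> < 1" using \<open>\<not> 1 \<le> ?l\<close> unfolding \<mu>_def by auto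
  obtain K where K: "\<forall>n s. real (card (adm E lab n s)) \<le> K * \<mu> ^ n" using walk_growth[OF mu(1)] by blast
  obtain s :: 's where True by simp
  have ge1: "1 \<le> K * \<mu> ^ n" for n
  proof -
    obtain v where "length v = n" "admissible_from E lab s v" using exists_adm[OF fs] by blast
    hence "v \<in> adm E lab n s" unfolding adm_def by simp
    hence "card (adm E lab n s) \<ge> 1" using finite_adm[of E lab n s] by (metis One_nat_def Suc_leI card_gt_0_iff empty_iff)
    hence "1 \<le> real (card (adm E lab n s))" by simp
    thus ?thesis using K[rule_format, of n s] by linarith
  qed
  have K0: "0 < K" using ge1[of 0] by simp
  obtain n where "\<mu> ^ n < 1 / K" using real_arch_pow_inv[of "1/K" \<mu>] K0 mu by auto
  hence "K * \<mu> ^ n < 1" using K0 by (simp add: field_simps)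
  thus False using ge1[of n] by simp
qed

lemma lower_elem:
  fixes E :: "('s::finite \<times> 's) set" and lab :: "'s \<times> 's \<Rightarrow> bool"
  assumes fs: "fsec E lab" and q: "CARD('x::finite) \<ge> 2" and eps: "0 < \<epsilon>"
  shows "\<exists>n (F :: 'x list set). n \<ge> 1 \<and> F \<noteq> {} \<and> zero_error_code E lab n F \<and>
     1 - max_ratio E lab - topological_entropy E TYPE('x) - 2 * \<epsilon>
       \<le> log (real CARD('x)) (real (card F)) / real n"
proof -
  let ?q = "real CARD('x)"
  let ?l = "perron_eigenvalue (adj_matrix E)"
  let ?\<tau> = "max_ratio E lab"
  let ?h = "topological_entropy E TYPE('x)"
  have q1: "1 < ?q" using q by simp
  have l1: "1 \<le> ?l" by (rule lam_ge1[OF fs])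
  have h: "?h = log ?q ?l" unfolding topological_entropy_def ..
  define \<mu> where "\<mu> = ?l * ?q powr \<epsilon>"
  have qe: "1 < ?q powr \<epsilon>" using q1 eps by (simp add: gr_one_powr)
  have mu: "?l < \<mu>" unfolding \<mu>_def
    using mult_strict_left_mono[OF qe, of ?l] l1 by simp
  have mu0: "0 < \<mu>" using l1 mu by linarith
  have logmu: "log ?q \<mu> = ?h + \<epsilon>" unfolding \<mu>_def h using l1 q1
    by (simp add: log_mult log_powr)
  obtain K where K: "\<forall>n s. real (card (adm E lab n s)) \<le> K * \<mu> ^ n" using walk_growth[OF mu] by blast
  obtain s :: 's where True by simp
  have K1: "1 \<le> K" using K[rule_format, of 0 s] by (simp add: adm_0)
  define K' where "K' = real CARD('s) * K"
  have "0 < CARD('s)" by simp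
  hence S1: "1 \<le> real CARD('s)" by linarith
  have K'1: "1 \<le> K'" unfolding K'_def using mult_mono[OF S1 K1] by simp
  have V: "real (card (Vset E lab n)) \<le> K' * \<mu> ^ n" for n
    using card_Vset_bound[OF K] unfolding K'_def by simp
  define c where "c = real CARD('s) + log ?q K'"
  have c0: "0 \<le> c" unfolding c_def using K'1 q1 by simp
  define n where "n = nat \<lceil>c / \<epsilon>\<rceil> + 1"
  have n1: "n \<ge> 1" unfolding n_def by simp
  have cn: "c / real n \<le> \<epsilon>"
  proof -
    have "c / \<epsilon> \<le> real n" unfolding n_def by linarith
    hence "c \<le> \<epsilon> * real n" using eps by (simp add: field_simps)
    thus ?thesis using n1 by (simp add: field_simps)
  qed
  define m where "m = nat \<lfloor>?\<tau> * real n\<rfloor> + CARD('s)"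
  obtain F :: "'x list set" where F: "F \<noteq> {}" "zero_error_code E lab n F"
     "CARD('x) ^ n \<le> card F * (card (Vset E lab n) * CARD('x) ^ m)"
    using lower_code[OF fs, of n] unfolding m_def by blast
  have Flen: "F \<subseteq> {xs. length xs = n}" using F(2) unfolding zero_error_code_def by auto
  hence Ffin: "finite F" by (rule finite_subset[OF _ finite_lists])
  have cF: "1 \<le> real (card F)" using F(1) Ffin by (simp add: Suc_leI card_gt_0_iff)
  obtain v where "length v = n" "admissible_from E lab s v" using exists_adm[OF fs] by blast
  hence "v \<in> Vset E lab n" unfolding Vset_def by auto
  hence cV: "1 \<le> real (card (Vset E lab n))"
  proof -
    have "Vset E lab n \<noteq> {}" using \<open>v \<in> Vset E lab n\<close> by auto
    hence "0 < card (Vset E lab n)" using finite_Vset[of E lab n] by (simp add: card_gt_0_iff)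
    thus ?thesis by linarith
  qed
  have tau0: "0 \<le> ?\<tau>" by (rule tau_facts(2)[OF fs])
  have mle: "real m \<le> ?\<tau> * real n + real CARD('s)"
    unfolding m_def using tau0 by simp
  have "?q ^ n \<le> real (card F) * (real (card (Vset E lab n)) * ?q ^ m)"
    using F(3) by (metis of_nat_le_iff of_nat_mult of_nat_power)
  hence "log ?q (?q ^ n) \<le> log ?q (real (card F) * (real (card (Vset E lab n)) * ?q ^ m))"
    using q1 cF cV by (subst log_le_cancel_iff) auto
  also have "\<dots> = log ?q (real (card F)) + log ?q (real (card (Vset E lab n))) + real m"
    using q1 cF cV by (simp add: log_mult log_nat_power)
  finally have A: "real n \<le> log ?q (real (card F)) + log ?q (real (card (Vset E lab n))) + real m"
    using q1 by (simp add: log_nat_power)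
  have "log ?q (real (card (Vset E lab n))) \<le> log ?q (K' * \<mu> ^ n)"
    using q1 cV V[of n] mu0 K'1 by (subst log_le_cancel_iff) auto
  also have "\<dots> = log ?q K' + real n * (?h + \<epsilon>)"
    using q1 K'1 mu0 by (simp add: log_mult log_nat_power logmu)
  finally have B: "log ?q (real (card (Vset E lab n))) \<le> log ?q K' + real n * (?h + \<epsilon>)" .
  have "real n * (1 - ?\<tau> - ?h - \<epsilon>) - c \<le> log ?q (real (card F))"
    using A B mle unfolding c_def by (simp add: algebra_simps)
  hence "(real n * (1 - ?\<tau> - ?h - \<epsilon>) - c) / real n \<le> log ?q (real (card F)) / real n"
    using n1 by (simp add: divide_right_mono)
  moreover have "(real n * (1 - ?\<tau> - ?h - \<epsilon>) - c) / real n = (1 - ?\<tau> - ?h - \<epsilon>) - c / real n"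
    using n1 by (simp add: field_simps)
  ultimately have "1 - ?\<tau> - ?h - 2 * \<epsilon> \<le> log ?q (real (card F)) / real n" using cn by linarith
  thus ?thesis using n1 F by blast
qed

theorem theorem4:
  fixes E :: "('s::finite \<times> 's) set" and lab :: "'s \<times> 's \<Rightarrow> bool"
  assumes "CARD('x::finite) \<ge> 2"
    and "fsec E lab"
  shows "1 - max_ratio E lab - topological_entropy E TYPE('x)
           \<le> zero_error_capacity E lab TYPE('x)
       \<and> zero_error_capacity E lab TYPE('x) \<le> 1 - max_ratio E lab"
proof -
  define S where "S = {log (real CARD('x)) (real (card F)) / real n | n (F :: 'x list set).
            n \<ge> 1 \<and> F \<noteq> {} \<and> zero_error_code E lab n F}"
  have C0: "zero_error_capacity E lab TYPE('x) = Sup S" unfolding zero_error_capacity_def S_def ..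
  obtain x0 :: 'x where True by simp
  have "zero_error_code E lab 1 {[x0]}" unfolding zero_error_code_def by auto
  hence "log (real CARD('x)) (real (card {[x0]})) / real (1::nat) \<in> S" unfolding S_def by blast
  hence ne: "S \<noteq> {}" by blast
  have ub: "r \<le> 1 - max_ratio E lab" if "r \<in> S" for r
    using that upper_code[OF assms(2) assms(1)] unfolding S_def by blast
  have up: "Sup S \<le> 1 - max_ratio E lab" by (rule cSup_least[OF ne ub])
  have bdd: "bdd_above S" using ub by (intro bdd_aboveI) 
  have "1 - max_ratio E lab - topological_entropy E TYPE('x) \<le> Sup S"
  proof (rule field_le_epsilon)
    fix e :: real assume e: "0 < e"
    obtain n and F :: "'x list set" where nF: "n \<ge> 1" "F \<noteq> {}" "zero_error_code E lab n F"
      "1 - max_ratio E lab - topological_entropy E TYPE('x) - 2 * (e/2)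
       \<le> log (real CARD('x)) (real (card F)) / real n"
      using lower_elem[OF assms(2) assms(1), of "e/2"] e by auto
    hence "log (real CARD('x)) (real (card F)) / real n \<in> S" unfolding S_def by blast
    hence "log (real CARD('x)) (real (card F)) / real n \<le> Sup S" by (rule cSup_upper[OF _ bdd])
    thus "1 - max_ratio E lab - topological_entropy E TYPE('x) \<le> Sup S + e" using nF(4) by simp
  qed
  thus ?thesis using up unfolding C0 by simp
qed

end
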